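(* Let $\mathfrak n=W\oplus\mathfrak z$ be a finite-dimensional 2-step nilpotent Lie algebra over a field $k$ of characteristic zero with center $\mathfrak z$ and linear complement $W$, and let $\delta$ be a Lie bialgebra cobracket on $\mathfrak n$. Then: (1) $\delta_1:W\to\Lambda^2W$ is a Lie coalgebra structure on $W$ (i.e. satisfies co-Jacobi); (2) if moreover $\delta(\mathfrak z)\subseteq\Lambda^2\mathfrak z$, then $T_iS_jT_k+T_kS_jT_i=0$ as maps $W\to W^*$, for all $1\le i,k\le\dim\mathfrak z$ and all $1\le j\le\dim W$.
   Context: A Lie bialgebra is a Lie algebra $\mathfrak g$ with a linear map $\delta:\mathfrak g\to\Lambda^2\mathfrak g$ satisfying co-Jacobi (in Sweedler notation $\delta(x)=x_1\wedge x_2$: $\delta(x_1)\wedge x_2-x_1\wedge\delta(x_2)=0$ in $\Lambda^3\mathfrak g$) and the 1-cocycle condition $\delta[x,y]=[\delta x,y]+[x,\delta y]$ (adjoint action on $\Lambda^2$). Using $\Lambda^2\mathfrak n=\Lambda^2W\oplus W\wedge\mathfrak z\oplus\Lambda^2\mathfrak z$, $\delta_1(v)$ for $v\in W$ denotes the $\Lambda^2W$-component of $\delta(v)$. Fix bases $\{z_i\}$ of $\mathfrak z$ and $\{\lambda_j\}$ of $W^*$. Define $T_i:W\to W^*$ by $[v,w]=\sum_iT_i(v)(w)z_i$ for $v,w\in W$. Let $[\,,\,]^*:W^*\times W^*\to W^*$ be the transpose of $\delta_1$: if $\delta_1(v)=v_1\wedge v_2$ then $[\lambda,\mu]^*(v)=\lambda(v_1)\mu(v_2)$.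 Define $S_j:W^*\to W\cong W^{**}$ by $[\lambda,\mu]^*=\sum_jS_j(\mu)(\lambda)\lambda_j$. *)

theory Defs
  imports Main
begin

text \<open>The Lie algebra n has dimension N = m + p with a basis
  e_0,...,e_(N-1) adapted to n = W + z: e_0..e_(m-1) is a basis of W and
  z_i = e_(m+i) (i < p) is a basis of z. Vectors are coordinate functions
  nat => 'k (only indices below the dimension matter). The bracket is given by
  structure constants C, the cobracket by the tensor D:
  delta(e_a) = sum_(b,c) D a b c (e_b tensor e_c), where Lambda^2 is identified
  with antisymmetric 2-tensors and Lambda^3 with alternating 3-tensors.\<close>

definition unitv :: "nat \<Rightarrow> nat \<Rightarrow> 'k::field_char_0" where
  "unitv u = (\<lambda>a. if a = u then 1 else 0)"

definition lbr :: "nat \<Rightarrow> (nat \<Rightarrow> nat \<Rightarrow> nat \<Rightarrow> 'k::field_char_0)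
    \<Rightarrow> (nat \<Rightarrow> 'k) \<Rightarrow> (nat \<Rightarrow> 'k) \<Rightarrow> (nat \<Rightarrow> 'k)" where
  "lbr N C x y = (\<lambda>c. \<Sum>a<N. \<Sum>b<N. x a * y b * C a b c)"

definition lie_algebra :: "nat \<Rightarrow> (nat \<Rightarrow> nat \<Rightarrow> nat \<Rightarrow> 'k::field_char_0) \<Rightarrow> bool" where
  "lie_algebra N C \<longleftrightarrow>
     (\<forall>x c. c < N \<longrightarrow> lbr N C x x c = 0) \<and>
     (\<forall>x y w c. c < N \<longrightarrow>
        lbr N C x (lbr N C y w) c + lbr N C y (lbr N C w x) c + lbr N C w (lbr N C x y) c = 0)"

definition cob :: "nat \<Rightarrow> (nat \<Rightarrow> nat \<Rightarrow> nat \<Rightarrow> 'k::field_char_0)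
    \<Rightarrow> (nat \<Rightarrow> 'k) \<Rightarrow> nat \<Rightarrow> nat \<Rightarrow> 'k" where
  "cob N D x = (\<lambda>b c. \<Sum>a<N. x a * D a b c)"

definition alt3 :: "(nat \<Rightarrow> nat \<Rightarrow> nat \<Rightarrow> 'k::field_char_0) \<Rightarrow> nat \<Rightarrow> nat \<Rightarrow> nat \<Rightarrow> 'k" where
  "alt3 t d f c = t d f c + t f c d + t c d f - t f d c - t d c f - t c f d"

text \<open>co-Jacobi: delta(x_1) wedge x_2 - x_1 wedge delta(x_2) = 0 in Lambda^3; this element
  equals (up to the nonzero factor 2) the alternation of (delta tensor id)(delta x).\<close>
definition cojacobi :: "nat \<Rightarrow> (nat \<Rightarrow> nat \<Rightarrow> nat \<Rightarrow> 'k::field_char_0) \<Rightarrow> bool" where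
  "cojacobi N D \<longleftrightarrow>
     (\<forall>x d f c. d < N \<longrightarrow> f < N \<longrightarrow> c < N \<longrightarrow>
        alt3 (\<lambda>d f c. \<Sum>b<N. cob N D x b c * cob N D (unitv b) d f) d f c = 0)"

definition lie_coalgebra :: "nat \<Rightarrow> (nat \<Rightarrow> nat \<Rightarrow> nat \<Rightarrow> 'k::field_char_0) \<Rightarrow> bool" where
  "lie_coalgebra N D \<longleftrightarrow>
     (\<forall>x b c. b < N \<longrightarrow> c < N \<longrightarrow> cob N D x b c = - cob N D x c b) \<and> cojacobi N D"

definition act2 :: "nat \<Rightarrow> (nat \<Rightarrow> nat \<Rightarrow> nat \<Rightarrow> 'k::field_char_0)
    \<Rightarrow> (nat \<Rightarrow> 'k) \<Rightarrow> (nat \<Rightarrow> nat \<Rightarrow> 'k) \<Rightarrow> nat \<Rightarrow> nat \<Rightarrow> 'k" where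
  "act2 N C x t = (\<lambda>b c. (\<Sum>u<N. lbr N C x (unitv u) b * t u c)
                       + (\<Sum>v<N. t b v * lbr N C x (unitv v) c))"

definition cocycle :: "nat \<Rightarrow> (nat \<Rightarrow> nat \<Rightarrow> nat \<Rightarrow> 'k::field_char_0)
    \<Rightarrow> (nat \<Rightarrow> nat \<Rightarrow> nat \<Rightarrow> 'k) \<Rightarrow> bool" where
  "cocycle N C D \<longleftrightarrow>
     (\<forall>x y b c. b < N \<longrightarrow> c < N \<longrightarrow>
        cob N D (lbr N C x y) b c = act2 N C x (cob N D y) b c - act2 N C y (cob N D x) b c)"

definition lie_bialgebra :: "nat \<Rightarrow> (nat \<Rightarrow> nat \<Rightarrow> nat \<Rightarrow> 'k::field_char_0)
    \<Rightarrow> (nat \<Rightarrow> nat \<Rightarrow> nat \<Rightarrow> 'k) \<Rightarrow> bool" where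
  "lie_bialgebra N C D \<longleftrightarrow> lie_algebra N C \<and> lie_coalgebra N D \<and> cocycle N C D"

definition center :: "nat \<Rightarrow> (nat \<Rightarrow> nat \<Rightarrow> nat \<Rightarrow> 'k::field_char_0) \<Rightarrow> (nat \<Rightarrow> 'k) set" where
  "center N C = {x. \<forall>y c. c < N \<longrightarrow> lbr N C x y c = 0}"

definition two_step_nilpotent :: "nat \<Rightarrow> (nat \<Rightarrow> nat \<Rightarrow> nat \<Rightarrow> 'k::field_char_0) \<Rightarrow> bool" where
  "two_step_nilpotent N C \<longleftrightarrow>
     (\<forall>x y w c. c < N \<longrightarrow> lbr N C x (lbr N C y w) c = 0) \<and>
     (\<exists>x y c. c < N \<and> lbr N C x y c \<noteq> 0)"

text \<open>delta_1(v): the Lambda^2 W component of delta(v), v in W (cobracket tensor of W).\<close>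
definition delta1 :: "nat \<Rightarrow> (nat \<Rightarrow> nat \<Rightarrow> nat \<Rightarrow> 'k::field_char_0) \<Rightarrow> nat \<Rightarrow> nat \<Rightarrow> nat \<Rightarrow> 'k" where
  "delta1 m D = (\<lambda>a b c. if a < m \<and> b < m \<and> c < m then D a b c else 0)"

definition Wpart :: "nat \<Rightarrow> (nat \<Rightarrow> 'k::field_char_0) \<Rightarrow> nat \<Rightarrow> 'k" where
  "Wpart m v = (\<lambda>a. if a < m then v a else 0)"

text \<open>T_i : W \<rightarrow> W^*, [v,w] = sum_i T_i(v)(w) z_i; elements of W^* are given by their
  values on the basis e_0..e_(m-1) of W (i.e. coordinates in the dual basis lambda_j).\<close>
definition Tmap :: "nat \<Rightarrow> nat \<Rightarrow> (nat \<Rightarrow> nat \<Rightarrow> nat \<Rightarrow> 'k::field_char_0)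
    \<Rightarrow> nat \<Rightarrow> (nat \<Rightarrow> 'k) \<Rightarrow> nat \<Rightarrow> 'k" where
  "Tmap m p C i v = (\<lambda>b. lbr (m + p) C (Wpart m v) (unitv b) (m + i))"

text \<open>[lambda,mu]^* (v) = lambda(v_1) mu(v_2) where delta_1(v) = v_1 wedge v_2 (pairing of
  lambda tensor mu with the tensor delta_1(v)); result as W^* coordinates.\<close>
definition dual_br :: "nat \<Rightarrow> (nat \<Rightarrow> nat \<Rightarrow> nat \<Rightarrow> 'k::field_char_0)
    \<Rightarrow> (nat \<Rightarrow> 'k) \<Rightarrow> (nat \<Rightarrow> 'k) \<Rightarrow> nat \<Rightarrow> 'k" where
  "dual_br m D l \<mu> = (\<lambda>a. \<Sum>b<m. \<Sum>c<m. l b * \<mu> c * cob m (delta1 m D) (unitv a) b c)"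

text \<open>S_j : W^* \<rightarrow> W = W^**, [lambda,mu]^* = sum_j S_j(mu)(lambda) lambda_j, with lambda_j the
  dual basis of e_0..e_(m-1). S_j(mu) is given by its coordinates S_j(mu)(lambda_b).\<close>
definition Smap :: "nat \<Rightarrow> (nat \<Rightarrow> nat \<Rightarrow> nat \<Rightarrow> 'k::field_char_0)
    \<Rightarrow> nat \<Rightarrow> (nat \<Rightarrow> 'k) \<Rightarrow> nat \<Rightarrow> 'k" where
  "Smap m D j \<mu> = (\<lambda>b. dual_br m D (unitv b) \<mu> j)"

end

theory Submission
  imports Defs
begin

lemma sum_unitv[simp]: "(\<Sum>a'<N. unitv a a' * f a') = (if a < N then f a else 0)"
proof -
  have "(\<Sum>a'<N. unitv a a' * f a') = (\<Sum>a'<N. if a' = a then f a' else 0)"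
    by (rule sum.cong) (auto simp: unitv_def)
  then show ?thesis by simp
qed

lemma sum_unitv'[simp]: "(\<Sum>a'<N. f a' * unitv a a') = (if a < N then f a else 0)"
  using sum_unitv[where N=N and a=a and f=f] by (simp add: mult.commute)

lemma lbr_uu: "a < N \<Longrightarrow> b < N \<Longrightarrow> lbr N C (unitv a) (unitv b) c = C a b c"
proof -
  assume "a < N" "b < N"
  have "lbr N C (unitv a) (unitv b) c = (\<Sum>aa<N. unitv a aa * (\<Sum>ba<N. unitv b ba * C aa ba c))"
    unfolding lbr_def by (simp add: sum_distrib_left mult.assoc del: sum_unitv sum_unitv')
  then show ?thesis using \<open>a < N\<close> \<open>b < N\<close> by simp
qed

lemma cob_u: "a < N \<Longrightarrow> cob N D (unitv a) b c = D a b c"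
  unfolding cob_def by simp

lemma lbr_add_left: "lbr N C (\<lambda>z. x z + y z) w c = lbr N C x w c + lbr N C y w c"
  by (simp add: lbr_def algebra_simps sum.distrib)
lemma lbr_add_right: "lbr N C w (\<lambda>z. x z + y z) c = lbr N C w x c + lbr N C w y c"
  by (simp add: lbr_def algebra_simps sum.distrib)

lemma sum_split: "(m::nat) \<le> N \<Longrightarrow> (\<Sum>a<N. g a) = (\<Sum>a<m. g a) + (\<Sum>a\<in>{m..<N}. g a)"
proof -
  assume "m \<le> N"
  then have "{..<N} = {..<m} \<union> {m..<N}" by auto
  then have "sum g {..<N} = sum g ({..<m} \<union> {m..<N})" by simp
  also have "\<dots> = sum g {..<m} + sum g {m..<N}" by (rule sum.union_disjoint) auto
  finally show ?thesis .
qed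

lemma swap_mult: "(\<Sum>c\<in>A. (f::nat\<Rightarrow>'k::field_char_0) c * (\<Sum>a\<in>B. g c a)) = (\<Sum>a\<in>B. \<Sum>c\<in>A. f c * g c a)"
proof -
  have "(\<Sum>c\<in>A. f c * (\<Sum>a\<in>B. g c a)) = (\<Sum>c\<in>A. \<Sum>a\<in>B. f c * g c a)"
    by (simp add: sum_distrib_left)
  also have "\<dots> = (\<Sum>a\<in>B. \<Sum>c\<in>A. f c * g c a)" by (rule sum.swap)
  finally show ?thesis .
qed

lemma abstract:
  fixes G D :: "nat \<Rightarrow> nat \<Rightarrow> nat \<Rightarrow> 'k::field_char_0"
  assumes GA: "\<And>i a b. i<p \<Longrightarrow> a<m \<Longrightarrow> b<m \<Longrightarrow> G i a b = - G i b a"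
    and DA: "\<And>j a c. j<m \<Longrightarrow> a<m \<Longrightarrow> c<m \<Longrightarrow> D j a c = - D j c a"
    and E: "\<And>i s t c. i<p \<Longrightarrow> s<m \<Longrightarrow> t<m \<Longrightarrow> c<m \<Longrightarrow>
             (\<Sum>u<m. G i s u * D t u c) = (\<Sum>u<m. G i t u * D s u c)"
    and ip: "i<p" and kp: "k<p" and jm: "j<m" and bm: "b<m" and em: "e<m"
  shows "(\<Sum>c<m. G k e c * (\<Sum>a<m. G i a b * D j a c))
       + (\<Sum>c<m. G i e c * (\<Sum>a<m. G k a b * D j a c)) = 0"
proof -
  have s1: "(\<Sum>a<m. G i a b * D j a c) = - (\<Sum>a<m. G i j a * D b a c)" if "c<m" for c
  proof -
    have "(\<Sum>a<m. G i a b * D j a c) = - (\<Sum>a<m. G i b a * D j a c)"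
      unfolding sum_negf[symmetric] by (rule sum.cong) (auto simp: GA[OF ip _ bm])
    also have "(\<Sum>a<m. G i b a * D j a c) = (\<Sum>a<m. G i j a * D b a c)"
      using E[OF ip bm jm that] .
    finally show ?thesis .
  qed
  have s2: "(\<Sum>c<m. G k e c * D b a c) = - (\<Sum>c<m. G k b c * D e c a)" if "a<m" for a
  proof -
    have "(\<Sum>c<m. G k e c * D b a c) = - (\<Sum>c<m. G k e c * D b c a)"
      unfolding sum_negf[symmetric] by (rule sum.cong) (auto simp: DA[OF bm that])
    also have "(\<Sum>c<m. G k e c * D b c a) = (\<Sum>c<m. G k b c * D e c a)"
      using E[OF kp em bm that] .
    finally show ?thesis .
  qed
  have s3: "(\<Sum>a<m. G i j a * D e c a) = - (\<Sum>a<m. G i e a * D j a c)" if "c<m" for c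
  proof -
    have "(\<Sum>a<m. G i j a * D e c a) = - (\<Sum>a<m. G i j a * D e a c)"
      unfolding sum_negf[symmetric] by (rule sum.cong) (auto simp: DA[OF em _ that])
    also have "(\<Sum>a<m. G i j a * D e a c) = (\<Sum>a<m. G i e a * D j a c)"
      using E[OF ip jm em that] .
    finally show ?thesis .
  qed
  have T1: "(\<Sum>c<m. G k e c * (\<Sum>a<m. G i a b * D j a c))
        = - (\<Sum>c<m. G k b c * (\<Sum>a<m. G i e a * D j a c))"
  proof -
    have "(\<Sum>c<m. G k e c * (\<Sum>a<m. G i a b * D j a c))
        = (\<Sum>c<m. G k e c * - (\<Sum>a<m. G i j a * D b a c))"
      by (rule sum.cong) (auto simp: s1)
    also have "\<dots> = - (\<Sum>c<m. G k e c * (\<Sum>a<m. G i j a * D b a c))"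
      by (simp add: sum_negf)
    also have "\<dots> = - (\<Sum>a<m. \<Sum>c<m. G k e c * (G i j a * D b a c))"
      unfolding swap_mult ..
    also have "\<dots> = - (\<Sum>a<m. G i j a * (\<Sum>c<m. G k e c * D b a c))"
      by (simp add: sum_distrib_left mult_ac)
    also have "\<dots> = (\<Sum>a<m. G i j a * (\<Sum>c<m. G k b c * D e c a))"
      unfolding sum_negf[symmetric] by (rule sum.cong) (auto simp: s2)
    also have "\<dots> = (\<Sum>c<m. \<Sum>a<m. G i j a * (G k b c * D e c a))"
      unfolding swap_mult ..
    also have "\<dots> = (\<Sum>c<m. G k b c * (\<Sum>a<m. G i j a * D e c a))"
      by (simp add: sum_distrib_left mult_ac)
    also have "\<dots> = - (\<Sum>c<m. G k b c * (\<Sum>a<m. G i e a * D j a c))"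
      unfolding sum_negf[symmetric] by (rule sum.cong) (auto simp: s3)
    finally show ?thesis .
  qed
  have pw: "G k a b * D j a c = G k b a * D j c a" if "a<m" "c<m" for a c
  proof -
    have "G k a b * D j a c = (- G k b a) * (- D j c a)"
      using GA[OF kp that(1) bm] DA[OF jm that(1) that(2)] by simp
    then show ?thesis by simp
  qed
  have T2: "(\<Sum>c<m. G i e c * (\<Sum>a<m. G k a b * D j a c))
        = (\<Sum>c<m. G k b c * (\<Sum>a<m. G i e a * D j a c))"
  proof -
    have "(\<Sum>c<m. G i e c * (\<Sum>a<m. G k a b * D j a c))
        = (\<Sum>c<m. \<Sum>a<m. G i e c * (G k b a * D j c a))"
      unfolding sum_distrib_left
      by (rule sum.cong[OF refl], rule sum.cong[OF refl]) (simp add: pw)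
    also have "\<dots> = (\<Sum>a<m. \<Sum>c<m. G i e c * (G k b a * D j c a))"
      by (rule sum.swap)
    also have "\<dots> = (\<Sum>c<m. G k b c * (\<Sum>a<m. G i e a * D j a c))"
      by (simp add: sum_distrib_left mult_ac)
    finally show ?thesis .
  qed
  show ?thesis using T1 T2 by simp
qed

lemma reorder:
  fixes v :: "nat \<Rightarrow> 'k::field_char_0"
  shows "(\<Sum>a\<in>A. (\<Sum>c\<in>B. (\<Sum>e\<in>E. v e * X e c) * Y a c) * Z a)
       = (\<Sum>e\<in>E. v e * (\<Sum>c\<in>B. X e c * (\<Sum>a\<in>A. Z a * Y a c)))"
proof -
  have "(\<Sum>a\<in>A. (\<Sum>c\<in>B. (\<Sum>e\<in>E. v e * X e c) * Y a c) * Z a)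
      = (\<Sum>a\<in>A. \<Sum>c\<in>B. \<Sum>e\<in>E. v e * X e c * Z a * Y a c)"
    by (simp add: sum_distrib_left sum_distrib_right mult_ac)
  also have "\<dots> = (\<Sum>c\<in>B. \<Sum>a\<in>A. \<Sum>e\<in>E. v e * X e c * Z a * Y a c)"
    by (rule sum.swap)
  also have "\<dots> = (\<Sum>c\<in>B. \<Sum>e\<in>E. \<Sum>a\<in>A. v e * X e c * Z a * Y a c)"
    by (rule sum.cong[OF refl]) (rule sum.swap)
  also have "\<dots> = (\<Sum>e\<in>E. \<Sum>c\<in>B. \<Sum>a\<in>A. v e * X e c * Z a * Y a c)"
    by (rule sum.swap)
  also have "\<dots> = (\<Sum>e\<in>E. v e * (\<Sum>c\<in>B. X e c * (\<Sum>a\<in>A. Z a * Y a c)))"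
    by (simp add: sum_distrib_left mult_ac)
  finally show ?thesis .
qed

theorem mainTheorem4:
  fixes m p :: nat
    and C D :: "nat \<Rightarrow> nat \<Rightarrow> nat \<Rightarrow> 'k::field_char_0"
  assumes bialg: "lie_bialgebra (m + p) C D"
    and nil: "two_step_nilpotent (m + p) C"
    and cent: "\<forall>x. x \<in> center (m + p) C \<longleftrightarrow> (\<forall>a<m. x a = 0)"
  shows "lie_coalgebra m (delta1 m D) \<and>
         ((\<forall>x. (\<forall>a<m. x a = 0) \<longrightarrow>
              (\<forall>b c. b < m + p \<longrightarrow> c < m + p \<longrightarrow> (b < m \<or> c < m) \<longrightarrow> cob (m + p) D x b c = 0))
          \<longrightarrow> (\<forall>i<p. \<forall>k<p. \<forall>j<m. \<forall>v. \<forall>b<m.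
                 Tmap m p C i (Smap m D j (Tmap m p C k v)) b
               + Tmap m p C k (Smap m D j (Tmap m p C i v)) b = 0))"
proof -
  define N where "N = m + p"
  have mN: "m \<le> N" by (simp add: N_def)
  have alt0: "\<And>x c. c < N \<Longrightarrow> lbr N C x x c = 0"
    using bialg unfolding lie_bialgebra_def lie_algebra_def N_def by blast
  have cobA: "\<And>x b c. b < N \<Longrightarrow> c < N \<Longrightarrow> cob N D x b c = - cob N D x c b"
    using bialg unfolding lie_bialgebra_def lie_coalgebra_def N_def by blast
  have cojac: "cojacobi N D"
    using bialg unfolding lie_bialgebra_def lie_coalgebra_def N_def by blast
  have coc: "\<And>x y b c. b < N \<Longrightarrow> c < N \<Longrightarrow>
      cob N D (lbr N C x y) b c = act2 N C x (cob N D y) b c - act2 N C y (cob N D x) b c"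
    using bialg unfolding lie_bialgebra_def cocycle_def N_def by blast
  have nil1: "\<And>x y w c. c < N \<Longrightarrow> lbr N C x (lbr N C y w) c = 0"
    using nil unfolding two_step_nilpotent_def N_def by blast
  have centI: "\<And>x y c. (\<forall>a<m. x a = 0) \<Longrightarrow> c < N \<Longrightarrow> lbr N C x y c = 0"
    using cent unfolding center_def N_def by blast
  have centD: "\<And>x a. (\<forall>y c. c < N \<longrightarrow> lbr N C x y c = 0) \<Longrightarrow> a < m \<Longrightarrow> x a = 0"
    using cent unfolding center_def N_def by blast
  have Caa: "\<And>a c. a < N \<Longrightarrow> c < N \<Longrightarrow> C a a c = 0"
  proof -
    fix a c assume "a < N" "c < N"
    then show "C a a c = 0" using alt0[of c "unitv a"] lbr_uu[of a N a C c] by simp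
  qed
  have F1: "C a b c = - C b a c" if "a < N" "b < N" "c < N" for a b c
  proof -
    have "lbr N C (\<lambda>z. unitv a z + unitv b z) (\<lambda>z. unitv a z + unitv b z) c = 0"
      using alt0 that by blast
    then have "C a a c + C a b c + (C b a c + C b b c) = 0"
      by (simp add: lbr_add_left lbr_add_right lbr_uu that)
    then show ?thesis using Caa that by (simp add: eq_neg_iff_add_eq_0)
  qed
  have vecA: "lbr N C x y c = - lbr N C y x c" if "c < N" for x y c
  proof -
    have "lbr N C y x c = (\<Sum>a<N. \<Sum>b<N. y b * x a * C b a c)"
      unfolding lbr_def by (rule sum.swap)
    also have "\<dots> = (\<Sum>a<N. - (\<Sum>b<N. x a * y b * C a b c))"
      unfolding sum_negf[symmetric]
    proof (rule sum.cong[OF refl], rule sum.cong[OF refl])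
      fix a b assume "a \<in> {..<N}" "b \<in> {..<N}"
      then have "C b a c = - C a b c" using F1[of b a c] that by simp
      then show "y b * x a * C b a c = - (x a * y b * C a b c)" by simp
    qed
    also have "\<dots> = - lbr N C x y c" unfolding lbr_def by (simp add: sum_negf)
    finally show ?thesis by simp
  qed
  have F2: "C a b c = 0" if "m \<le> a" "a < N" "b < N" "c < N" for a b c
  proof -
    have "lbr N C (unitv a) (unitv b) c = 0"
      by (rule centI) (use that in \<open>auto simp: unitv_def\<close>)
    then show ?thesis using lbr_uu that by metis
  qed
  have F2': "C a b c = 0" if "m \<le> b" "b < N" "a < N" "c < N" for a b c
    using F1[OF that(3) that(2) that(4)] F2[OF that(1) that(2) that(3) that(4)] by simp
  have F3v: "lbr N C x y c = 0" if "c < m" for x y c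
  proof -
    have "\<forall>w c'. c' < N \<longrightarrow> lbr N C (lbr N C x y) w c' = 0"
      using vecA nil1 by (metis neg_equal_0_iff_equal)
    then show ?thesis using centD that by blast
  qed
  have F3: "C a b c = 0" if "c < m" "a < N" "b < N" for a b c
    using F3v[OF that(1), of "unitv a" "unitv b"] lbr_uu that by metis
  have DA: "D a b c = - D a c b" if "a < N" "b < N" "c < N" for a b c
    using cobA[OF that(2) that(3), of "unitv a"] cob_u that(1) by metis
  have actE: "act2 N C (unitv s) (cob N D (unitv t)) b c = (\<Sum>u<N. C s u b * D t u c)"
    if "s < N" "t < N" "c < m" for s t b c
  proof -
    have "act2 N C (unitv s) (cob N D (unitv t)) b c
        = (\<Sum>u<N. lbr N C (unitv s) (unitv u) b * cob N D (unitv t) u c)"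
      unfolding act2_def using F3v[OF that(3)] by simp
    also have "\<dots> = (\<Sum>u<N. C s u b * D t u c)"
      by (rule sum.cong[OF refl]) (simp add: lbr_uu cob_u that)
    finally show ?thesis .
  qed
  have restr: "(\<Sum>u<N. C s u b * X u) = (\<Sum>u<m. C s u b * X u)" if "s < N" "b < N" for s b X
  proof -
    have "(\<Sum>u\<in>{m..<N}. C s u b * X u) = 0"
      by (rule sum.neutral) (use F2' that in auto)
    then show ?thesis using sum_split[OF mN, of "\<lambda>u. C s u b * X u"] by simp
  qed
  have P1a: "D b0 d f = 0" if "m \<le> b0" "b0 < N" "d < m" "f < m" for b0 d f
  proof -
    have fN: "f < N" using that mN by simp
    have key: "(\<Sum>u<m. C s u (m+i) * D b0 u f) = 0" if "s < m" "i < p" for s i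
    proof -
      have sN: "s < N" and iN: "m + i < N" using that mN by (auto simp: N_def)
      have "cob N D (lbr N C (unitv s) (unitv b0)) (m+i) f = 0"
        unfolding cob_def
        by (rule sum.neutral) (use F2' \<open>m \<le> b0\<close> \<open>b0 < N\<close> sN in \<open>auto simp: lbr_uu\<close>)
      moreover have "act2 N C (unitv b0) (cob N D (unitv s)) (m+i) f = 0"
        using actE[OF \<open>b0 < N\<close> sN \<open>f < m\<close>] F2 \<open>m \<le> b0\<close> \<open>b0 < N\<close> iN
        by (simp add: sum.neutral)
      moreover have "act2 N C (unitv s) (cob N D (unitv b0)) (m+i) f
            = (\<Sum>u<m. C s u (m+i) * D b0 u f)"
        using actE[OF sN \<open>b0 < N\<close> \<open>f < m\<close>] restr[OF sN iN] by simp
      ultimately show ?thesis using coc[OF iN fN, of "unitv s" "unitv b0"] by simp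
    qed
    define w where "w = (\<lambda>u. if u < m then D b0 u f else 0)"
    have inner: "(\<Sum>u<N. w u * C a u c) = 0" if "a < N" "c < N" for a c
    proof (cases "c < m")
      case True
      show ?thesis by (rule sum.neutral) (use F3 that True in auto)
    next
      case False
      define i where "i = c - m"
      have ci: "c = m + i" and ip: "i < p" using False that by (auto simp: i_def N_def)
      show ?thesis
      proof (cases "a < m")
        case True
        have "(\<Sum>u<N. w u * C a u c) = (\<Sum>u<N. C a u c * w u)" by (simp add: mult.commute)
        also have "\<dots> = (\<Sum>u<m. C a u c * w u)" by (rule restr[OF that])
        also have "\<dots> = (\<Sum>u<m. C a u (m+i) * D b0 u f)"
          by (rule sum.cong[OF refl]) (simp add: w_def ci)
        also have "\<dots> = 0" using key[OF True ip] .
        finally show ?thesis .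
      next
        case False
        show ?thesis by (rule sum.neutral) (use F2 that False in auto)
      qed
    qed
    have "\<forall>y c. c < N \<longrightarrow> lbr N C w y c = 0"
    proof (intro allI impI)
      fix y c assume cN: "c < N"
      have "lbr N C y w c = (\<Sum>a<N. y a * (\<Sum>u<N. w u * C a u c))"
        unfolding lbr_def by (simp add: sum_distrib_left mult_ac)
      also have "\<dots> = 0" by (rule sum.neutral) (use inner cN in auto)
      finally show "lbr N C w y c = 0" using vecA[OF cN, of w y] by simp
    qed
    then have "w d = 0" using centD that by blast
    then show ?thesis using that by (simp add: w_def)
  qed
  have cob1: "cob m (delta1 m D) x b c = (\<Sum>a<m. x a * D a b c)" if "b < m" "c < m" for x b c
    unfolding cob_def delta1_def by (rule sum.cong) (auto simp: that)
  have part1: "lie_coalgebra m (delta1 m D)"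
    unfolding lie_coalgebra_def
  proof (intro conjI)
    show "\<forall>x b c. b < m \<longrightarrow> c < m \<longrightarrow> cob m (delta1 m D) x b c = - cob m (delta1 m D) x c b"
    proof (intro allI impI)
      fix x :: "nat \<Rightarrow> 'k" and b c assume bm: "b < m" and cm: "c < m"
      have "(\<Sum>a<m. x a * D a b c) = - (\<Sum>a<m. x a * D a c b)"
        unfolding sum_negf[symmetric]
      proof (rule sum.cong[OF refl])
        fix a assume "a \<in> {..<m}"
        then have "D a b c = - D a c b" using DA[of a b c] bm cm mN by simp
        then show "x a * D a b c = - (x a * D a c b)" by simp
      qed
      then show "cob m (delta1 m D) x b c = - cob m (delta1 m D) x c b"
        using cob1[OF bm cm] cob1[OF cm bm] by simp
    qed
  next
    show "cojacobi m (delta1 m D)"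
      unfolding cojacobi_def
    proof (intro allI impI)
      fix x :: "nat \<Rightarrow> 'k" and d f c assume dm: "d < m" and fm: "f < m" and cm: "c < m"
      define x' where "x' = (\<lambda>a. if a < m then x a else 0)"
      have cob2: "cob N D x' b c = (\<Sum>a<m. x a * D a b c)" for b c
      proof -
        have z: "(\<Sum>a\<in>{m..<N}. x' a * D a b c) = 0"
          by (rule sum.neutral) (auto simp: x'_def)
        have "cob N D x' b c = (\<Sum>a<m. x' a * D a b c)"
          unfolding cob_def using sum_split[OF mN, of "\<lambda>a. x' a * D a b c"] z by simp
        also have "\<dots> = (\<Sum>a<m. x a * D a b c)"
          by (rule sum.cong) (auto simp: x'_def)
        finally show ?thesis .
      qed
      have cobu1: "cob m (delta1 m D) (unitv b) d' f' = D b d' f'" if "b < m" "d' < m" "f' < m" for b d' f'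
        using that unfolding cob_def by (simp add: delta1_def)
      have eq: "(\<Sum>b<m. cob m (delta1 m D) x b c' * cob m (delta1 m D) (unitv b) d' f')
              = (\<Sum>b<N. cob N D x' b c' * cob N D (unitv b) d' f')"
        if "d' < m" "f' < m" "c' < m" for d' f' c'
      proof -
        have z: "(\<Sum>b\<in>{m..<N}. cob N D x' b c' * cob N D (unitv b) d' f') = 0"
          by (rule sum.neutral) (auto simp: cob_u P1a that)
        have "(\<Sum>b<N. cob N D x' b c' * cob N D (unitv b) d' f')
            = (\<Sum>b<m. cob N D x' b c' * cob N D (unitv b) d' f')"
          using sum_split[OF mN, of "\<lambda>b. cob N D x' b c' * cob N D (unitv b) d' f'"] z by simp
        also have "\<dots> = (\<Sum>b<m. cob m (delta1 m D) x b c' * cob m (delta1 m D) (unitv b) d' f')"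
        proof (rule sum.cong[OF refl])
          fix b assume "b \<in> {..<m}"
          then have bm: "b < m" by simp
          then have bN: "b < N" using mN by simp
          show "cob N D x' b c' * cob N D (unitv b) d' f'
              = cob m (delta1 m D) x b c' * cob m (delta1 m D) (unitv b) d' f'"
            using cob2[of b c'] cob1[OF bm that(3), of x] cob_u[OF bN, of D d' f'] cobu1[OF bm that(1,2)] by simp
        qed
        finally show ?thesis by simp
      qed
      have dN: "d < N" and fN: "f < N" and cN: "c < N" using dm fm cm mN by auto
      have "alt3 (\<lambda>d f c. \<Sum>b<N. cob N D x' b c * cob N D (unitv b) d f) d f c = 0"
        using cojac dN fN cN unfolding cojacobi_def by blast
      then show "alt3 (\<lambda>d f c. \<Sum>b<m. cob m (delta1 m D) x b c * cob m (delta1 m D) (unitv b) d f) d f c = 0"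
        unfolding alt3_def using eq dm fm cm by simp
    qed
  qed
  have part2: "(\<forall>x. (\<forall>a<m. x a = 0) \<longrightarrow>
              (\<forall>b c. b < m + p \<longrightarrow> c < m + p \<longrightarrow> (b < m \<or> c < m) \<longrightarrow> cob (m + p) D x b c = 0))
          \<longrightarrow> (\<forall>i<p. \<forall>k<p. \<forall>j<m. \<forall>v. \<forall>b<m.
                 Tmap m p C i (Smap m D j (Tmap m p C k v)) b
               + Tmap m p C k (Smap m D j (Tmap m p C i v)) b = 0)"
  proof (rule impI)
    assume H: "\<forall>x. (\<forall>a<m. x a = 0) \<longrightarrow>
              (\<forall>b c. b < m + p \<longrightarrow> c < m + p \<longrightarrow> (b < m \<or> c < m) \<longrightarrow> cob (m + p) D x b c = 0)"
    have E: "(\<Sum>u<m. C s u (m+i) * D t u c) = (\<Sum>u<m. C t u (m+i) * D s u c)"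
      if "i < p" "s < m" "t < m" "c < m" for i s t c
    proof -
      have sN: "s < N" and tN: "t < N" and iN: "m + i < N" and cN: "c < N"
        using that mN by (auto simp: N_def)
      have "cob N D (lbr N C (unitv s) (unitv t)) (m+i) c = 0"
        using H F3v that iN cN unfolding N_def by blast
      moreover have "act2 N C (unitv s) (cob N D (unitv t)) (m+i) c = (\<Sum>u<m. C s u (m+i) * D t u c)"
        using actE[OF sN tN \<open>c < m\<close>] restr[OF sN iN] by simp
      moreover have "act2 N C (unitv t) (cob N D (unitv s)) (m+i) c = (\<Sum>u<m. C t u (m+i) * D s u c)"
        using actE[OF tN sN \<open>c < m\<close>] restr[OF tN iN] by simp
      ultimately show ?thesis using coc[OF iN cN, of "unitv s" "unitv t"] by simp
    qed
    have Tm: "Tmap m p C i' u b' = (\<Sum>a<m. u a * C a b' (m+i'))" if "b' < N" for i' u b'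
    proof -
      have "Tmap m p C i' u b' = (\<Sum>a<N. Wpart m u a * (\<Sum>b''<N. unitv b' b'' * C a b'' (m+i')))"
        unfolding Tmap_def lbr_def N_def
        by (simp add: sum_distrib_left mult.assoc del: sum_unitv sum_unitv')
      also have "\<dots> = (\<Sum>a<N. Wpart m u a * C a b' (m+i'))" using that by simp
      also have "\<dots> = (\<Sum>a<m. Wpart m u a * C a b' (m+i'))"
      proof -
        have "(\<Sum>a\<in>{m..<N}. Wpart m u a * C a b' (m+i')) = 0"
          by (rule sum.neutral) (auto simp: Wpart_def)
        then show ?thesis using sum_split[OF mN, of "\<lambda>a. Wpart m u a * C a b' (m+i')"] by simp
      qed
      also have "\<dots> = (\<Sum>a<m. u a * C a b' (m+i'))"
        by (rule sum.cong) (auto simp: Wpart_def)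
      finally show ?thesis .
    qed
    have Sm: "Smap m D j' \<mu> b' = (\<Sum>c<m. \<mu> c * D j' b' c)" if "b' < m" "j' < m" for j' \<mu> b'
    proof -
      have cu: "cob m (delta1 m D) (unitv j') b'' c = D j' b'' c" if "b'' < m" "c < m" for b'' c
        using that \<open>j' < m\<close> unfolding cob_def by (simp add: delta1_def)
      have "Smap m D j' \<mu> b' = (\<Sum>b''<m. \<Sum>c<m. unitv b' b'' * \<mu> c * cob m (delta1 m D) (unitv j') b'' c)"
        unfolding Smap_def dual_br_def ..
      also have "\<dots> = (\<Sum>b''<m. unitv b' b'' * (\<Sum>c<m. \<mu> c * D j' b'' c))"
        by (rule sum.cong[OF refl]) (simp add: sum_distrib_left cu mult.assoc)
      also have "\<dots> = (\<Sum>c<m. \<mu> c * D j' b' c)" using that by simp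
      finally show ?thesis .
    qed
    have TF: "Tmap m p C i' (Smap m D j (Tmap m p C k' v)) b
        = (\<Sum>e<m. v e * (\<Sum>c<m. C e c (m+k') * (\<Sum>a<m. C a b (m+i') * D j a c)))"
      if "j < m" "b < m" for i' k' j v b
    proof -
      have bN: "b < N" using that mN by simp
      have "Tmap m p C i' (Smap m D j (Tmap m p C k' v)) b
          = (\<Sum>a<m. Smap m D j (Tmap m p C k' v) a * C a b (m+i'))"
        using Tm[OF bN] .
      also have "\<dots> = (\<Sum>a<m. (\<Sum>c<m. (\<Sum>e<m. v e * C e c (m+k')) * D j a c) * C a b (m+i'))"
      proof (rule sum.cong[OF refl])
        fix a assume "a \<in> {..<m}"
        then have am: "a < m" by simp
        have "Smap m D j (Tmap m p C k' v) a = (\<Sum>c<m. Tmap m p C k' v c * D j a c)"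
          using Sm[OF am \<open>j < m\<close>] .
        also have "\<dots> = (\<Sum>c<m. (\<Sum>e<m. v e * C e c (m+k')) * D j a c)"
          by (rule sum.cong[OF refl]) (use Tm mN in auto)
        finally show "Smap m D j (Tmap m p C k' v) a * C a b (m+i')
            = (\<Sum>c<m. (\<Sum>e<m. v e * C e c (m+k')) * D j a c) * C a b (m+i')" by simp
      qed
      also have "\<dots> = (\<Sum>e<m. v e * (\<Sum>c<m. C e c (m+k') * (\<Sum>a<m. C a b (m+i') * D j a c)))"
        by (rule reorder)
      finally show ?thesis .
    qed
    show "\<forall>i<p. \<forall>k<p. \<forall>j<m. \<forall>v. \<forall>b<m.
                 Tmap m p C i (Smap m D j (Tmap m p C k v)) b
               + Tmap m p C k (Smap m D j (Tmap m p C i v)) b = 0"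
    proof (intro allI impI)
      fix i k j v b
      assume ip: "i < p" and kp: "k < p" and jm: "j < m" and bm: "b < m"
      have GA: "C a b' (m+i') = - C b' a (m+i')" if "i' < p" "a < m" "b' < m" for i' a b'
        using F1[of a b' "m+i'"] that mN by (simp add: N_def)
      have DA': "D j' a c = - D j' c a" if "j' < m" "a < m" "c < m" for j' a c
        using DA[of j' a c] that mN by simp
      have ab: "(\<Sum>c<m. C e c (m+k) * (\<Sum>a<m. C a b (m+i) * D j a c))
          + (\<Sum>c<m. C e c (m+i) * (\<Sum>a<m. C a b (m+k) * D j a c)) = 0" if "e < m" for e
        using abstract[where G="\<lambda>i a b. C a b (m+i)" and D=D and p=p and m=m,
            OF GA DA' E ip kp jm bm that] by simp
      have "Tmap m p C i (Smap m D j (Tmap m p C k v)) b + Tmap m p C k (Smap m D j (Tmap m p C i v)) b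
          = (\<Sum>e<m. v e * ((\<Sum>c<m. C e c (m+k) * (\<Sum>a<m. C a b (m+i) * D j a c))
          + (\<Sum>c<m. C e c (m+i) * (\<Sum>a<m. C a b (m+k) * D j a c))))"
        unfolding TF[OF jm bm] by (simp add: distrib_left sum.distrib)
      also have "\<dots> = 0" by (rule sum.neutral) (simp add: ab)
      finally show "Tmap m p C i (Smap m D j (Tmap m p C k v)) b + Tmap m p C k (Smap m D j (Tmap m p C i v)) b = 0" .
    qed
  qed
  show ?thesis using part1 part2 by blast
qed

end
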